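(* Let $N$ be a finite set, $r\notin N$, $V=N\cup\{r\}$, and let $G=(V,E)$ be the complete graph on $V$ with edge weights $w:E\to\mathbb{R}$ taking the distinct values $w_1<\dots<w_k$. If the spanning tree game on $G$ is submodular, then for every $i<k$ the graph $G_i$ contains (a) no bad hole and (b) no bad induced diamond.
   Context: For $S\subseteq V$, $\mathrm{mst}(S)$ is the weight of a minimum spanning tree of $G[S]$. The spanning tree game on $G$ has player set $N$ and $\nu(S)=\mathrm{mst}(S\cup\{r\})$; it is submodular if $\nu(A)+\nu(B)\ge\nu(A\cup B)+\nu(A\cap B)$ for all $A,B\subseteq N$. $E_i=\{e\in E:w(e)\le w_i\}$, $G_i=(V,E_i)$. A hole is an induced cycle with at least four vertices; a hole in $G_i$ is bad if it contains a vertex $x\neq r$ with $rx\notin E_i$. A diamond is $K_4$ minus one edge; its tips are its two vertices of degree 2. For a cycle $C$ and a chord $f=xy$ of $C$, with $P_1,P_2$ the two $x$-$y$ paths of $C$, $f$ covers $C$ if $w(f)\ge w(e)$ for all $e\in E(P_1)$ or for all $e\in E(P_2)$; $C$ is well-covered if covered by all its chords. An induced diamond in $G_i$ is bad if its Hamiltonian cycle is well-covered (its chord being the edge joining the two non-tip vertices) and at least one of its tips $x\ne r$ satisfies $rx\notin E_i$. *)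

theory Defs
  imports Complex_Main
begin

text \<open>Undirected edges are 2-element vertex sets. The complete graph on a vertex set S has
  edge set edges_on S.\<close>
definition edges_on :: "'a set \<Rightarrow> 'a set set" where
  "edges_on S = {e. e \<subseteq> S \<and> card e = 2}"

definition adj :: "'a set set \<Rightarrow> 'a \<Rightarrow> 'a \<Rightarrow> bool" where
  "adj T u v \<longleftrightarrow> {u, v} \<in> T"

text \<open>T is a spanning tree of the complete graph G[S]: a connected, acyclic edge set on S
  (acyclic: no edge lies on a cycle, i.e. deleting any edge disconnects its endpoints).\<close>
definition spanning_tree :: "'a set \<Rightarrow> 'a set set \<Rightarrow> bool" where
  "spanning_tree S T \<longleftrightarrow>
     T \<subseteq> edges_on S \<and>
     (\<forall>x\<in>S. \<forall>y\<in>S. (adj T)\<^sup>*\<^sup>* x y) \<and>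
     (\<forall>e\<in>T. \<forall>x y. e = {x, y} \<longrightarrow> \<not> (adj (T - {e}))\<^sup>*\<^sup>* x y)"

definition mst :: "('a set \<Rightarrow> real) \<Rightarrow> 'a set \<Rightarrow> real" where
  "mst w S = Min ((\<lambda>T. \<Sum>e\<in>T. w e) ` {T. spanning_tree S T})"

definition spanning_tree_game :: "'a \<Rightarrow> ('a set \<Rightarrow> real) \<Rightarrow> 'a set \<Rightarrow> real" where
  "spanning_tree_game r w S = mst w (S \<union> {r})"

definition submodular_game :: "'a set \<Rightarrow> ('a set \<Rightarrow> real) \<Rightarrow> bool" where
  "submodular_game N \<nu> \<longleftrightarrow>
     (\<forall>A B. A \<subseteq> N \<longrightarrow> B \<subseteq> N \<longrightarrow> \<nu> A + \<nu> B \<ge> \<nu> (A \<union> B) + \<nu> (A \<inter> B))"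

text \<open>The distinct weight values w_1 < ... < w_k (1-indexed) of the edges of the complete graph on V.\<close>
definition weight_value :: "'a set \<Rightarrow> ('a set \<Rightarrow> real) \<Rightarrow> nat \<Rightarrow> real" where
  "weight_value V w i = sorted_list_of_set (w ` edges_on V) ! (i - 1)"

definition level_edges :: "'a set \<Rightarrow> ('a set \<Rightarrow> real) \<Rightarrow> nat \<Rightarrow> 'a set set" where
  "level_edges V w i = {e \<in> edges_on V. w e \<le> weight_value V w i}"

text \<open>A hole in the graph (V,F): an induced cycle cs (list of its distinct vertices in cyclic
  order) with at least four vertices.\<close>
definition hole :: "'a set \<Rightarrow> 'a set set \<Rightarrow> 'a list \<Rightarrow> bool" where
  "hole V F cs \<longleftrightarrow>
     distinct cs \<and> length cs \<ge> 4 \<and> set cs \<subseteq> V \<and>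
     (\<forall>i<length cs. \<forall>j<length cs. i \<noteq> j \<longrightarrow>
        ({cs ! i, cs ! j} \<in> F \<longleftrightarrow>
          (j = Suc i mod length cs \<or> i = Suc j mod length cs)))"

definition bad_hole :: "'a set \<Rightarrow> 'a \<Rightarrow> 'a set set \<Rightarrow> 'a list \<Rightarrow> bool" where
  "bad_hole V r F cs \<longleftrightarrow> hole V F cs \<and> (\<exists>x\<in>set cs. x \<noteq> r \<and> {r, x} \<notin> F)"

definition induced_diamond :: "'a set \<Rightarrow> 'a set set \<Rightarrow> 'a \<Rightarrow> 'a \<Rightarrow> 'a \<Rightarrow> 'a \<Rightarrow> bool" where
  "induced_diamond V F a b c d \<longleftrightarrow>
     distinct [a, b, c, d] \<and> {a, b, c, d} \<subseteq> V \<and>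
     {a, c} \<in> F \<and> {a, d} \<in> F \<and> {b, c} \<in> F \<and> {b, d} \<in> F \<and> {c, d} \<in> F \<and> {a, b} \<notin> F"

text \<open>For the Hamiltonian cycle a-c-b-d-a of a diamond the two c-d paths are
  c-a-d and c-b-d.\<close>
definition chord_covers :: "('a set \<Rightarrow> real) \<Rightarrow> 'a set \<Rightarrow> 'a set list \<Rightarrow> 'a set list \<Rightarrow> bool" where
  "chord_covers w f P1 P2 \<longleftrightarrow> (\<forall>e\<in>set P1. w f \<ge> w e) \<or> (\<forall>e\<in>set P2. w f \<ge> w e)"

text \<open>The Hamiltonian cycle a-c-b-d-a of an induced diamond has the single chord {c,d} in (V,F),
  so it is well-covered iff this chord covers it.\<close>
definition bad_diamond :: "'a set \<Rightarrow> 'a \<Rightarrow> ('a set \<Rightarrow> real) \<Rightarrow> 'a set set \<Rightarrow> 'a \<Rightarrow> 'a \<Rightarrow> 'a \<Rightarrow> 'a \<Rightarrow> bool" where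
  "bad_diamond V r w F a b c d \<longleftrightarrow>
     induced_diamond V F a b c d \<and>
     chord_covers w {c, d} [{c, a}, {a, d}] [{c, b}, {b, d}] \<and>
     (\<exists>x\<in>{a, b}. x \<noteq> r \<and> {r, x} \<notin> F)"

end

theory Submission
  imports Defs "HOL-Number_Theory.Cong"
begin

definition reach :: "'a set set \<Rightarrow> 'a \<Rightarrow> 'a \<Rightarrow> bool" where
  "reach F = (adj F)\<^sup>*\<^sup>*"
definition cls :: "'a set set \<Rightarrow> 'a \<Rightarrow> 'a set" where
  "cls F u = {v. reach F u v}"
definition kap :: "'a set \<Rightarrow> 'a set set \<Rightarrow> nat" where
  "kap X F = card (cls F ` X)"
definition forest :: "'a set set \<Rightarrow> bool" where
  "forest F \<longleftrightarrow> (\<forall>e\<in>F. \<forall>x y. e = {x, y} \<longrightarrow> \<not> reach (F - {e}) x y)"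

lemma reach_refl[simp]: "reach F u u"
  by (simp add: reach_def)

lemma reach_edge: "{u, v} \<in> F \<Longrightarrow> reach F u v"
  by (simp add: reach_def adj_def r_into_rtranclp)

lemma reach_trans: "reach F u v \<Longrightarrow> reach F v x \<Longrightarrow> reach F u x"
  unfolding reach_def by (rule rtranclp_trans)

lemma reach_sym: "reach F u v \<Longrightarrow> reach F v u"
  unfolding reach_def
proof (induction rule: rtranclp_induct)
  case base then show ?case by simp
next
  case (step y z)
  then have "adj F z y" by (simp add: adj_def insert_commute)
  then show ?case using step(3) by (rule converse_rtranclp_into_rtranclp)
qed

lemma reach_mono: "F \<subseteq> F' \<Longrightarrow> reach F u v \<Longrightarrow> reach F' u v"
  unfolding reach_def adj_def by (rule mono_rtranclp[rule_format, of "\<lambda>u v. {u,v} \<in> F"]) auto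

lemma reach_insert:
  assumes "reach (insert {a, b} F) u v"
  shows "reach F u v \<or> (reach F u a \<and> reach F b v) \<or> (reach F u b \<and> reach F a v)"
  using assms unfolding reach_def[of "insert {a,b} F"]
proof (induction rule: rtranclp_induct)
  case base then show ?case by simp
next
  case (step y z)
  from step(2) have "{y,z} = {a,b} \<or> {y,z} \<in> F" by (simp add: adj_def)
  then have "(y = a \<and> z = b) \<or> (y = b \<and> z = a) \<or> reach F y z"
    by (metis doubleton_eq_iff reach_edge)
  then show ?case using step(3) by (metis reach_trans reach_refl)
qed

lemma reach_insert_iff:
  "reach (insert {a, b} F) u v \<longleftrightarrow>
   reach F u v \<or> (reach F u a \<and> reach F b v) \<or> (reach F u b \<and> reach F a v)"
proof
  assume "reach (insert {a, b} F) u v" then show "reach F u v \<or> (reach F u a \<and> reach F b v) \<or> (reach F u b \<and> reach F a v)"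
    by (rule reach_insert)
next
  have m: "reach F s t \<Longrightarrow> reach (insert {a, b} F) s t" for s t by (rule reach_mono[of F], auto)
  have ab: "reach (insert {a, b} F) a b" "reach (insert {a, b} F) b a"
    by (auto intro!: reach_edge simp: insert_commute)
  assume "reach F u v \<or> (reach F u a \<and> reach F b v) \<or> (reach F u b \<and> reach F a v)"
  then show "reach (insert {a, b} F) u v" using m ab by (meson reach_trans)
qed

lemma reach_isolated:
  assumes "\<forall>e\<in>F. q \<notin> e" "reach F q v" shows "v = q"
  using assms(2) unfolding reach_def
proof (induction rule: rtranclp_induct)
  case base then show ?case by simp
next
  case (step y z) then show ?case using assms(1) by (auto simp: adj_def)
qed

lemma reach_cls: "reach F u v \<Longrightarrow> cls F u = cls F v"
proof -
  assume h: "reach F u v"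
  have "reach F u x \<longleftrightarrow> reach F v x" for x
    using h reach_sym[OF h] reach_trans[of F u v x] reach_trans[of F v u x] by blast
  then show ?thesis unfolding cls_def by blast
qed

lemma in_cls: "u \<in> cls F u"
  by (simp add: cls_def)

lemma reach_sub:
  assumes "\<forall>a b. {a, b} \<in> H \<longrightarrow> reach F a b" "reach H u v" shows "reach F u v"
  using assms(2) unfolding reach_def[of H]
proof (induction rule: rtranclp_induct)
  case base then show ?case by simp
next
  case (step y z) then show ?case using assms(1) by (meson adj_def reach_trans)
qed

lemma kap_insert_reach:
  assumes "reach F a b" shows "kap X (insert {a, b} F) = kap X F"
proof -
  have "reach (insert {a, b} F) = reach F"
  proof (intro ext iffI)
    fix u v assume "reach (insert {a, b} F) u v"
    then have "reach F u v \<or> (reach F u a \<and> reach F b v) \<or> (reach F u b \<and> reach F a v)"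
      by (rule reach_insert)
    moreover have "reach F b a" using assms by (rule reach_sym)
    ultimately show "reach F u v"
    proof (elim disjE conjE)
      assume "reach F u a" "reach F b v" then show ?thesis using assms by (meson reach_trans)
    next
      assume "reach F u b" "reach F a v" "reach F b a" then show ?thesis by (meson reach_trans)
    qed
  next
    fix u v assume "reach F u v" then show "reach (insert {a, b} F) u v"
      by (rule reach_mono[rotated]) blast
  qed
  then show ?thesis by (simp add: kap_def cls_def)
qed

lemma kap_insert_noreach:
  assumes X: "finite X" "a \<in> X" "b \<in> X" and nr: "\<not> reach F a b"
  shows "kap X F = Suc (kap X (insert {a, b} F))"
proof -
  let ?C = "cls F" and ?C' = "cls (insert {a, b} F)"
  have Ca: "?C u = ?C a \<longleftrightarrow> reach F u a" for u
  proof
    assume "?C u = ?C a" then have "a \<in> ?C u" using in_cls[of a F] by simp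
    then show "reach F u a" by (simp add: cls_def)
  qed (rule reach_cls)
  have Cb: "?C u = ?C b \<longleftrightarrow> reach F u b" for u
  proof
    assume "?C u = ?C b" then have "b \<in> ?C u" using in_cls[of b F] by simp
    then show "reach F u b" by (simp add: cls_def)
  qed (rule reach_cls)
  have eqv: "reach F u s \<Longrightarrow> reach F u v \<longleftrightarrow> reach F s v" for u s v
    by (meson reach_sym reach_trans)
  have C': "?C' u = (if ?C u = ?C a \<or> ?C u = ?C b then ?C a \<union> ?C b else ?C u)" for u
  proof (cases "reach F u a")
    case True
    then have nb: "\<not> reach F u b" using nr by (meson reach_sym reach_trans)
    have vv: "v \<in> ?C' u \<longleftrightarrow> reach F a v \<or> reach F b v" for v
      unfolding cls_def mem_Collect_eq reach_insert_iff using True nb eqv[OF True] by blast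
    have "?C u = ?C a" using True Ca by blast
    moreover have "?C' u = ?C a \<union> ?C b" using vv unfolding set_eq_iff Un_iff by (simp add: cls_def)
    ultimately show ?thesis by simp
  next
    case False
    note na = False
    show ?thesis
    proof (cases "reach F u b")
      case True
      have vv: "v \<in> ?C' u \<longleftrightarrow> reach F a v \<or> reach F b v" for v
        unfolding cls_def mem_Collect_eq reach_insert_iff using True na eqv[OF True] by blast
      have "?C u = ?C b" using True Cb by blast
      moreover have "?C' u = ?C a \<union> ?C b" using vv unfolding set_eq_iff Un_iff by (simp add: cls_def)
      ultimately show ?thesis by simp
    next
      case False
      have vv: "v \<in> ?C' u \<longleftrightarrow> reach F u v" for v
        unfolding cls_def mem_Collect_eq reach_insert_iff using False na by blast
      have "?C u \<noteq> ?C a" "?C u \<noteq> ?C b" using False na Ca Cb by blast+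
      moreover have "?C' u = ?C u" using vv unfolding set_eq_iff by (simp add: cls_def)
      ultimately show ?thesis by simp
    qed
  qed
  have ne: "?C a \<noteq> ?C b" using nr Cb[of a] by simp
  let ?I = "?C ` X"
  have img: "?C' ` X = insert (?C a \<union> ?C b) (?I - {?C a, ?C b})"
  proof
    show "?C' ` X \<subseteq> insert (?C a \<union> ?C b) (?I - {?C a, ?C b})"
    proof
      fix K assume "K \<in> ?C' ` X"
      then obtain u where u: "u \<in> X" "K = ?C' u" by blast
      show "K \<in> insert (?C a \<union> ?C b) (?I - {?C a, ?C b})"
      proof (cases "?C u = ?C a \<or> ?C u = ?C b")
        case True then show ?thesis using u C'[of u] by simp
      next
        case False then show ?thesis using u C'[of u] by simp
      qed
    qed
    show "insert (?C a \<union> ?C b) (?I - {?C a, ?C b}) \<subseteq> ?C' ` X"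
    proof
      fix K assume "K \<in> insert (?C a \<union> ?C b) (?I - {?C a, ?C b})"
      then show "K \<in> ?C' ` X"
      proof
        assume "K = ?C a \<union> ?C b" then have "K = ?C' a" using C'[of a] by simp
        then show ?thesis using X(2) by (rule image_eqI)
      next
        assume "K \<in> ?I - {?C a, ?C b}"
        then obtain u where u: "u \<in> X" "K = ?C u" "?C u \<noteq> ?C a" "?C u \<noteq> ?C b" by blast
        then have "K = ?C' u" using C'[of u] by simp
        then show ?thesis using u(1) by (rule image_eqI)
      qed
    qed
  qed
  have notin: "?C a \<union> ?C b \<notin> ?I - {?C a, ?C b}"
  proof
    assume "?C a \<union> ?C b \<in> ?I - {?C a, ?C b}"
    then obtain u where u: "?C a \<union> ?C b = ?C u" "?C u \<noteq> ?C a" by blast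
    have "a \<in> ?C a \<union> ?C b" using in_cls[of a F] by blast
    then have "a \<in> ?C u" using u(1) by simp
    then have "reach F u a" by (simp add: cls_def)
    then have "?C u = ?C a" by (rule reach_cls)
    then show False using u by simp
  qed
  have fin: "finite ?I" using X by simp
  have sub: "{?C a, ?C b} \<subseteq> ?I" using X by blast
  have c2: "card {?C a, ?C b} = 2" using ne by simp
  have "card (?I - {?C a, ?C b}) = card ?I - card {?C a, ?C b}"
    using card_Diff_subset[OF _ sub] by blast
  moreover have "card ?I \<ge> 2" using card_mono[OF fin sub] c2 by simp
  moreover have "card (?C' ` X) = Suc (card (?I - {?C a, ?C b}))"
    unfolding img using card_insert_disjoint[OF finite_Diff[OF fin] notin] .
  ultimately show ?thesis unfolding kap_def c2 by simp
qed

lemma kap_antimono: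
  assumes "F \<subseteq> F'" "finite X" shows "kap X F' \<le> kap X F"
proof -
  define g where "g K = \<Union> (cls F' ` K)" for K
  have gc: "g (cls F u) = cls F' u" for u
  proof -
    have "v \<in> cls F u \<Longrightarrow> cls F' v = cls F' u" for v
    proof -
      assume "v \<in> cls F u"
      then have "reach F u v" by (simp add: cls_def)
      then have "reach F' u v" using assms(1) by (rule reach_mono[rotated])
      then show ?thesis by (rule reach_cls[symmetric])
    qed
    then show ?thesis unfolding g_def using in_cls[of u F] by blast
  qed
  have eq: "cls F' ` X = g ` (cls F ` X)" unfolding image_image gc ..
  show ?thesis unfolding kap_def eq by (rule card_image_le) (simp add: assms(2))
qed

lemma kap_insert_vertex:
  assumes "finite X" "q \<notin> X" "\<forall>e\<in>F. q \<notin> e"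
  shows "kap (insert q X) F = Suc (kap X F)"
proof -
  have cq: "cls F q = {q}" using reach_isolated[OF assms(3)] by (auto simp: cls_def)
  have "{q} \<notin> cls F ` X"
  proof
    assume "{q} \<in> cls F ` X"
    then obtain u where "u \<in> X" "cls F u = {q}" by auto
    then show False using in_cls[of u F] assms(2) by auto
  qed
  then show ?thesis unfolding kap_def using cq assms(1) by simp
qed

lemma kap_empty: "kap X {} = card X"
proof -
  have c: "cls {} u = {u}" for u using reach_isolated[of "{}" u] by (auto simp: cls_def)
  have "inj_on (cls {}) X" by (simp add: inj_on_def c)
  then show ?thesis unfolding kap_def by (rule card_image)
qed

lemma kap_one:
  assumes "finite X" "X \<noteq> {}" "\<forall>u\<in>X. \<forall>v\<in>X. reach F u v"
  shows "kap X F = 1"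
proof -
  obtain x where x: "x \<in> X" using assms by auto
  have e: "u \<in> X \<Longrightarrow> cls F u = cls F x" for u using assms(3) x by (intro reach_cls) blast
  have "cls F ` X = {cls F x}" using x e by blast
  then show ?thesis by (simp add: kap_def)
qed

lemma kap_one_reach:
  assumes "kap X F = 1" "u \<in> X" "v \<in> X" shows "reach F u v"
proof -
  from assms(1) obtain K where "cls F ` X = {K}" unfolding kap_def by (meson card_1_singletonE)
  then have "cls F u = cls F v" using assms by blast
  then have "v \<in> cls F u" using in_cls[of v F] by simp
  then show ?thesis by (simp add: cls_def)
qed

lemma finite_edges_on: "finite X \<Longrightarrow> finite (edges_on X)"
  unfolding edges_on_def by (rule finite_subset[of _ "Pow X"]) auto

lemma edges_on_E:
  assumes "e \<in> edges_on X" obtains a b where "e = {a, b}" "a \<noteq> b" "a \<in> X" "b \<in> X"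
  using assms unfolding edges_on_def by (auto simp: card_2_iff)

lemma forest_subset: "forest F \<Longrightarrow> F' \<subseteq> F \<Longrightarrow> forest F'"
proof -
  assume f: "forest F" and s: "F' \<subseteq> F"
  show "forest F'" unfolding forest_def
  proof (intro ballI allI impI notI)
    fix e x y assume "e \<in> F'" "e = {x, y}" "reach (F' - {e}) x y"
    moreover have "F' - {e} \<subseteq> F - {e}" using s by blast
    ultimately have "reach (F - {e}) x y" "e \<in> F" "e = {x, y}" using s reach_mono[of "F' - {e}" "F - {e}" x y] by blast+
    then show False using f unfolding forest_def by blast
  qed
qed

lemma forest_empty: "forest {}"
  by (simp add: forest_def)

lemma forest_insert:
  assumes f: "forest F" and nr: "\<not> reach F a b"
  shows "forest (insert {a, b} F)"
  unfolding forest_def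
proof (intro ballI allI impI)
  fix e x y assume e: "e \<in> insert {a, b} F" and exy: "e = {x, y}"
  show "\<not> reach (insert {a, b} F - {e}) x y"
  proof (cases "e = {a, b}")
    case True
    show ?thesis
    proof
      assume "reach (insert {a, b} F - {e}) x y"
      then have "reach F x y" by (rule reach_mono[rotated]) (use True in blast)
      moreover have "(x = a \<and> y = b) \<or> (x = b \<and> y = a)" using True exy by (metis doubleton_eq_iff)
      ultimately show False using nr reach_sym[of F b a] by blast
    qed
  next
    case False
    then have eF: "e \<in> F" using e by simp
    have eq: "insert {a, b} F - {e} = insert {a, b} (F - {e})" using False by blast
    have nxy: "\<not> reach (F - {e}) x y" using f eF exy unfolding forest_def by blast
    have sub: "reach (F - {e}) s t \<Longrightarrow> reach F s t" for s t using reach_mono[of "F - {e}" F s t] by blast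
    have exy': "reach F x y" "reach F y x" using eF exy by (auto intro!: reach_edge simp: insert_commute)
    show ?thesis
    proof
      assume "reach (insert {a, b} F - {e}) x y"
      then have "reach (F - {e}) x y \<or> (reach (F - {e}) x a \<and> reach (F - {e}) b y) \<or>
                 (reach (F - {e}) x b \<and> reach (F - {e}) a y)"
        unfolding eq by (rule reach_insert)
      then show False
      proof (elim disjE conjE)
        assume "reach (F - {e}) x y" then show False using nxy by simp
      next
        assume h: "reach (F - {e}) x a" "reach (F - {e}) b y"
        have "reach F a x" using sub[OF h(1)] by (rule reach_sym)
        then have "reach F a y" using exy'(1) by (rule reach_trans)
        moreover have "reach F y b" using sub[OF h(2)] by (rule reach_sym)
        ultimately show False using nr by (meson reach_trans)
      next
        assume h: "reach (F - {e}) x b" "reach (F - {e}) a y"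
        have "reach F a y" using sub[OF h(2)] .
        then have "reach F a x" using exy'(2) by (rule reach_trans)
        then have "reach F a b" using sub[OF h(1)] by (rule reach_trans)
        then show False using nr by simp
      qed
    qed
  qed
qed

lemma forest_card:
  assumes "finite F" "finite X" "F \<subseteq> edges_on X" "forest F"
  shows "kap X F + card F = card X"
  using assms(1,3,4)
proof (induction F rule: finite_induct)
  case empty then show ?case by (simp add: kap_empty)
next
  case (insert e F)
  then have fF: "forest F" by (meson forest_subset subset_insertI)
  have IH: "kap X F + card F = card X" using insert fF by simp
  have "e \<in> edges_on X" using insert(4) by simp
  then obtain a b where ab: "e = {a, b}" "a \<noteq> b" "a \<in> X" "b \<in> X"
    by (rule edges_on_E)
  have "\<not> reach (insert e F - {e}) a b" using insert(5) ab unfolding forest_def by blast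
  moreover have "insert e F - {e} = F" using insert(2) by simp
  ultimately have "\<not> reach F a b" by simp
  then have "kap X F = Suc (kap X (insert e F))"
    using kap_insert_noreach[OF assms(2) ab(3,4)] ab(1) by simp
  then show ?case using IH insert(1,2) by simp
qed

lemma reach_all_sub:
  assumes "\<forall>e\<in>H. \<forall>a b. e = {a, b} \<longrightarrow> reach F a b" "F \<subseteq> H"
  shows "kap X H = kap X F"
proof -
  have "reach H = reach F"
  proof (intro ext iffI)
    fix u v assume "reach H u v" then show "reach F u v"
      by (rule reach_sub[rotated]) (use assms(1) in blast)
  next
    fix u v assume "reach F u v" then show "reach H u v"
      using assms(2) by (rule reach_mono[rotated])
  qed
  then show ?thesis by (simp add: kap_def cls_def)
qed

lemma extend_forest:
  assumes X: "finite X" "H \<subseteq> edges_on X" and f: "forest F" "F \<subseteq> H"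
  shows "\<exists>F'. forest F' \<and> F \<subseteq> F' \<and> F' \<subseteq> H \<and> kap X F' = kap X H"
  using f
proof (induction "card (H - F)" arbitrary: F rule: less_induct)
  case less
  have finH: "finite H" using finite_subset[OF X(2) finite_edges_on[OF X(1)]] .
  show ?case
  proof (cases "\<exists>a b. {a, b} \<in> H \<and> \<not> reach F a b")
    case True
    then obtain a b where ab: "{a, b} \<in> H" "\<not> reach F a b" by blast
    have "{a, b} \<notin> F" using ab(2) reach_edge[of a b F] by blast
    then have abH: "{a, b} \<in> H - F" using ab(1) by simp
    have "H - insert {a, b} F = (H - F) - {{a, b}}" by blast
    then have lt: "card (H - insert {a, b} F) < card (H - F)"
      using card_Diff1_less[OF finite_Diff[OF finH] abH] by simp
    have "forest (insert {a, b} F)" using less(2) ab(2) by (rule forest_insert)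
    moreover have "insert {a, b} F \<subseteq> H" using less(3) ab(1) by blast
    ultimately obtain F' where "forest F'" "insert {a, b} F \<subseteq> F'" "F' \<subseteq> H" "kap X F' = kap X H"
      using less(1)[OF lt] by blast
    then show ?thesis by blast
  next
    case False
    then have "\<forall>e\<in>H. \<forall>a b. e = {a, b} \<longrightarrow> reach F a b" by blast
    then have "kap X H = kap X F" using less(3) by (rule reach_all_sub)
    then show ?thesis using less(2,3) by (intro exI[of _ F]) simp
  qed
qed

lemma kap_step:
  assumes X: "finite X" "a \<in> X" "b \<in> X"
  shows "int (kap X (H \<union> G)) - int (kap X G) \<le>
         int (kap X (H \<union> insert {a, b} G)) - int (kap X (insert {a, b} G))"
proof -
  have eq: "H \<union> insert {a, b} G = insert {a, b} (H \<union> G)" by blast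
  have m: "reach G a b \<Longrightarrow> reach (H \<union> G) a b" using reach_mono[of G "H \<union> G" a b] by blast
  show ?thesis
  proof (cases "reach G a b")
    case True
    then show ?thesis unfolding eq using kap_insert_reach[OF m[OF True]] kap_insert_reach[OF True] by simp
  next
    case False
    note g = kap_insert_noreach[OF X False]
    show ?thesis
    proof (cases "reach (H \<union> G) a b")
      case True then show ?thesis unfolding eq using g kap_insert_reach[OF True] by simp
    next
      case False then show ?thesis unfolding eq using g kap_insert_noreach[OF X False] by simp
    qed
  qed
qed

lemma kap_chain:
  assumes X: "finite X" and D: "finite D" "D \<subseteq> edges_on X"
  shows "int (kap X (H \<union> G)) - int (kap X G) \<le>
         int (kap X (H \<union> (G \<union> D))) - int (kap X (G \<union> D))"
  using D
proof (induction D rule: finite_induct)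
  case empty then show ?case by simp
next
  case (insert e D)
  have "e \<in> edges_on X" using insert(4) by simp
  then obtain a b where ab: "e = {a, b}" "a \<in> X" "b \<in> X" by (rule edges_on_E)
  have "G \<union> insert e D = insert {a, b} (G \<union> D)" using ab by blast
  then show ?case using insert kap_step[OF X ab(2,3), of H "G \<union> D"] by simp
qed

lemma kap_chain':
  assumes X: "finite X" and "G \<subseteq> G'" "finite G'" "G' \<subseteq> edges_on X"
  shows "int (kap X (H \<union> G)) - int (kap X G) \<le> int (kap X (H \<union> G')) - int (kap X G')"
proof -
  have "G \<union> (G' - G) = G'" using assms(2) by blast
  moreover have "finite (G' - G)" "G' - G \<subseteq> edges_on X" using assms by auto
  ultimately show ?thesis using kap_chain[OF X, of "G' - G" H G] by simp
qed

lemma kap_supermod: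
  assumes X: "finite X" "finite F2" "F2 \<subseteq> edges_on X"
  shows "kap X F1 + kap X F2 \<le> kap X (F1 \<union> F2) + kap X (F1 \<inter> F2)"
proof -
  have "F1 \<union> (F1 \<inter> F2) = F1" by blast
  then show ?thesis using kap_chain'[OF X(1) _ X(2,3), of "F1 \<inter> F2" F1] by simp
qed

lemma kap_strict:
  assumes X: "finite X" "finite F2" "F2 \<subseteq> edges_on X"
    and F0: "F0 \<subseteq> F1" "insert {q, u} (insert {q, v} F0) \<subseteq> F2"
    and qu: "q \<in> X" "u \<in> X" "v \<in> X"
    and nr: "\<not> reach (insert {q, u} F0) q v" and r: "reach (insert {q, u} F1) q v"
  shows "kap X F1 + kap X F2 < kap X (F1 \<union> F2) + kap X F0"
proof -
  define g where "g G = int (kap X (F1 \<union> G)) - int (kap X G)" for G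
  let ?G1 = "insert {q, u} F0" let ?G2 = "insert {q, v} ?G1"
  have "g F0 \<le> g ?G1" unfolding g_def by (rule kap_step[OF X(1) qu(1,2)])
  moreover have "g ?G2 = g ?G1 + 1"
  proof -
    have a: "kap X ?G1 = Suc (kap X ?G2)" by (rule kap_insert_noreach[OF X(1) qu(1,3) nr])
    have "F1 \<union> ?G2 = insert {q, v} (insert {q, u} F1)" "F1 \<union> ?G1 = insert {q, u} F1" using F0(1) by blast+
    then have b: "kap X (F1 \<union> ?G2) = kap X (F1 \<union> ?G1)" using kap_insert_reach[OF r] by simp
    show ?thesis unfolding g_def using a b by simp
  qed
  moreover have "g ?G2 \<le> g F2" unfolding g_def
    by (rule kap_chain'[OF X(1) _ X(2,3)]) (use F0(2) in blast)
  moreover have "F1 \<union> F0 = F1" using F0(1) by blast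
  ultimately show ?thesis unfolding g_def by simp
qed

locale wg =
  fixes V :: "'a set" and w :: "'a set \<Rightarrow> real"
  assumes finV: "finite V" and K2: "2 \<le> card (w ` edges_on V)"
begin

abbreviation K where "K \<equiv> card (w ` edges_on V)"

definition th :: "nat \<Rightarrow> real" where
  "th j = sorted_list_of_set (w ` edges_on V) ! j"

definition lev :: "nat \<Rightarrow> 'a set \<Rightarrow> 'a set set" where
  "lev j X = {e \<in> edges_on X. w e \<le> th j}"

definition cc :: "nat \<Rightarrow> 'a set \<Rightarrow> nat" where
  "cc j X = kap X (lev j X)"

definition dl :: "nat \<Rightarrow> real" where
  "dl j = th (Suc j) - th j"

definition Phi :: "'a set \<Rightarrow> real" where
  "Phi X = (real (card X) - 1) * th (K - 1) - (\<Sum>j<K-1. dl j * (real (card X) - real (cc j X)))"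

lemma finW: "finite (w ` edges_on V)"
  using finite_imageI[OF finite_edges_on[OF finV]] .

lemma len: "length (sorted_list_of_set (w ` edges_on V)) = K"
  by simp

lemma th_less: "j < j' \<Longrightarrow> j' < K \<Longrightarrow> th j < th j'"
  unfolding th_def using sorted_wrt_nth_less[OF strict_sorted_list_of_set, of j j' "w ` edges_on V"] len by simp

lemma th_le_iff: "j < K \<Longrightarrow> j' < K \<Longrightarrow> th j \<le> th j' \<longleftrightarrow> j \<le> j'"
  by (metis linorder_not_le nless_le th_less order.strict_implies_order)

lemma dl_pos: "Suc j < K \<Longrightarrow> dl j > 0"
  unfolding dl_def using th_less[of j "Suc j"] by simp

lemma w_th: assumes "e \<in> edges_on V" shows "\<exists>m<K. w e = th m"
proof -
  have "w e \<in> set (sorted_list_of_set (w ` edges_on V))" using assms finW by simp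
  then obtain m where "m < length (sorted_list_of_set (w ` edges_on V))" "sorted_list_of_set (w ` edges_on V) ! m = w e"
    by (meson in_set_conv_nth)
  then show ?thesis unfolding th_def by auto
qed

lemma layer:
  assumes m: "m < K"
  shows "th m = th (K - 1) - (\<Sum>j<K-1. dl j * (if th m \<le> th j then 1 else 0))"
proof -
  have "(\<Sum>j<K-1. dl j * (if th m \<le> th j then 1 else 0)) = (\<Sum>j<K-1. if m \<le> j then dl j else 0)"
    by (rule sum.cong) (use m in \<open>auto simp: th_le_iff\<close>)
  also have "\<dots> = sum dl ({..<K-1} \<inter> {j. m \<le> j})" by (simp add: sum.inter_restrict)
  also have "{..<K-1} \<inter> {j. m \<le> j} = {m..<K-1}" by auto
  also have "sum dl {m..<K-1} = th (K - 1) - th m" unfolding dl_def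
    by (rule sum_Suc_diff') (use m in simp)
  finally show ?thesis by simp
qed

lemma layer_w:
  assumes "e \<in> edges_on V"
  shows "w e = th (K - 1) - (\<Sum>j<K-1. dl j * (if w e \<le> th j then 1 else 0))"
  using w_th[OF assms] layer by auto

lemma edges_on_mono: "X \<subseteq> Y \<Longrightarrow> edges_on X \<subseteq> edges_on Y"
  unfolding edges_on_def by blast

lemma tree_sum:
  assumes X: "X \<subseteq> V" and T: "T \<subseteq> edges_on X"
  shows "(\<Sum>e\<in>T. w e) = real (card T) * th (K - 1) - (\<Sum>j<K-1. dl j * real (card (T \<inter> lev j X)))"
proof -
  have TV: "T \<subseteq> edges_on V" using T edges_on_mono[OF X] by blast
  have finT: "finite T" using finite_subset[OF TV finite_edges_on[OF finV]] .
  have "(\<Sum>e\<in>T. w e) = (\<Sum>e\<in>T. th (K - 1) - (\<Sum>j<K-1. dl j * (if w e \<le> th j then 1 else 0)))"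
    by (rule sum.cong) (use TV layer_w in auto)
  also have "\<dots> = real (card T) * th (K - 1) - (\<Sum>e\<in>T. \<Sum>j<K-1. dl j * (if w e \<le> th j then 1 else 0))"
    by (simp add: sum_subtractf)
  also have "(\<Sum>e\<in>T. \<Sum>j<K-1. dl j * (if w e \<le> th j then 1 else 0)) =
             (\<Sum>j<K-1. \<Sum>e\<in>T. dl j * (if w e \<le> th j then 1 else 0))"
    by (rule sum.swap)
  also have "\<dots> = (\<Sum>j<K-1. dl j * real (card (T \<inter> lev j X)))"
  proof (rule sum.cong[OF refl])
    fix j
    have "(\<Sum>e\<in>T. dl j * (if w e \<le> th j then 1 else 0)) = dl j * (\<Sum>e\<in>T. (if w e \<le> th j then 1 else 0))"
      by (simp add: sum_distrib_left)
    also have "(\<Sum>e\<in>T. (if w e \<le> th j then 1 else 0)) = (\<Sum>e\<in>T \<inter> {e. w e \<le> th j}. (1::real))"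
      using sum.inter_restrict[OF finT, of "\<lambda>_. (1::real)" "{e. w e \<le> th j}"] by simp
    also have "T \<inter> {e. w e \<le> th j} = T \<inter> lev j X" using T unfolding lev_def by blast
    finally show "(\<Sum>e\<in>T. dl j * (if w e \<le> th j then 1 else 0)) = dl j * real (card (T \<inter> lev j X))"
      by simp
  qed
  finally show ?thesis .
qed

lemma lev_sub: "lev j X \<subseteq> edges_on X"
  unfolding lev_def by blast

lemma lev_mono: "j \<le> j' \<Longrightarrow> j' < K \<Longrightarrow> lev j X \<subseteq> lev j' X"
  unfolding lev_def using th_le_iff[of j j'] by fastforce

lemma lev_top: assumes "X \<subseteq> V" shows "lev (K - 1) X = edges_on X"
proof -
  have "e \<in> edges_on X \<Longrightarrow> w e \<le> th (K - 1)" for e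
  proof -
    assume "e \<in> edges_on X"
    then have "e \<in> edges_on V" using edges_on_mono[OF assms] by blast
    then obtain m where "m < K" "w e = th m" using w_th by blast
    then show ?thesis using th_le_iff[of m "K - 1"] K2 by simp
  qed
  then show ?thesis unfolding lev_def by blast
qed

lemma cc_top: assumes "X \<subseteq> V" "X \<noteq> {}" shows "cc (K - 1) X = 1"
proof -
  have finX: "finite X" using finite_subset[OF assms(1) finV] .
  have "\<forall>u\<in>X. \<forall>v\<in>X. reach (edges_on X) u v"
  proof (intro ballI)
    fix u v assume uv: "u \<in> X" "v \<in> X"
    show "reach (edges_on X) u v"
    proof (cases "u = v")
      case False
      then have "{u, v} \<in> edges_on X" using uv unfolding edges_on_def by auto
      then show ?thesis by (rule reach_edge)
    qed simp
  qed
  then show ?thesis unfolding cc_def lev_top[OF assms(1)] using kap_one[OF finX assms(2)] by blast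
qed

lemma spanning_tree_forest:
  "spanning_tree X T \<longleftrightarrow> T \<subseteq> edges_on X \<and> (\<forall>x\<in>X. \<forall>y\<in>X. reach T x y) \<and> forest T"
  unfolding spanning_tree_def forest_def reach_def ..

lemma tree_lower:
  assumes X: "X \<subseteq> V" "X \<noteq> {}" and T: "spanning_tree X T"
  shows "Phi X \<le> (\<Sum>e\<in>T. w e)"
proof -
  have finX: "finite X" using finite_subset[OF X(1) finV] .
  have TE: "T \<subseteq> edges_on X" and con: "\<forall>x\<in>X. \<forall>y\<in>X. reach T x y" and fT: "forest T"
    using T unfolding spanning_tree_forest by auto
  have finT: "finite T" using finite_subset[OF TE finite_edges_on[OF finX]] .
  have "kap X T = 1" using kap_one[OF finX X(2) con] .
  then have cT: "card T + 1 = card X" using forest_card[OF finT finX TE fT] by simp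
  have cj: "card (T \<inter> lev j X) + cc j X \<le> card X" for j
  proof -
    have f: "forest (T \<inter> lev j X)" using forest_subset[OF fT Int_lower1] .
    have "kap X (T \<inter> lev j X) + card (T \<inter> lev j X) = card X"
      by (rule forest_card[OF _ finX _ f]) (use finT TE in auto)
    moreover have "kap X (lev j X) \<le> kap X (T \<inter> lev j X)" by (rule kap_antimono[OF _ finX]) blast
    ultimately show ?thesis unfolding cc_def by simp
  qed
  have "(\<Sum>j<K-1. dl j * real (card (T \<inter> lev j X))) \<le> (\<Sum>j<K-1. dl j * (real (card X) - real (cc j X)))"
  proof (rule sum_mono)
    fix j assume "j \<in> {..<K-1}"
    then have "Suc j < K" by simp
    then have a: "dl j \<ge> 0" using dl_pos[of j] by simp
    have b: "real (card (T \<inter> lev j X)) \<le> real (card X) - real (cc j X)" using cj[of j] by linarith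
    show "dl j * real (card (T \<inter> lev j X)) \<le> dl j * (real (card X) - real (cc j X))"
      by (rule mult_left_mono[OF b a])
  qed
  moreover have "real (card T) = real (card X) - 1" using cT by linarith
  ultimately show ?thesis unfolding tree_sum[OF X(1) TE] Phi_def by simp
qed

lemma kruskal:
  assumes X: "X \<subseteq> V" and n: "n < K"
  shows "\<exists>F. forest F \<and> F \<subseteq> lev n X \<and> kap X F = cc n X \<and> (\<forall>j\<le>n. card (F \<inter> lev j X) + cc j X = card X)"
  using n
proof (induction n)
  have finX: "finite X" using finite_subset[OF X(1) finV] .
  case 0
  obtain F where F: "forest F" "F \<subseteq> lev 0 X" "kap X F = kap X (lev 0 X)"
    using extend_forest[OF finX lev_sub forest_empty] by blast
  have finF: "finite F" using finite_subset[OF order.trans[OF F(2) lev_sub] finite_edges_on[OF finX]] .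
  have "kap X F + card F = card X" using forest_card[OF finF finX order.trans[OF F(2) lev_sub] F(1)] .
  moreover have "F \<inter> lev 0 X = F" using F(2) by blast
  ultimately show ?case using F unfolding cc_def by auto
next
  have finX: "finite X" using finite_subset[OF X(1) finV] .
  case (Suc n)
  then obtain F where F: "forest F" "F \<subseteq> lev n X" "kap X F = cc n X" "\<forall>j\<le>n. card (F \<inter> lev j X) + cc j X = card X"
    by auto
  have "F \<subseteq> lev (Suc n) X" using F(2) lev_mono[of n "Suc n" X] Suc(2) by simp
  then obtain F' where F': "forest F'" "F \<subseteq> F'" "F' \<subseteq> lev (Suc n) X" "kap X F' = kap X (lev (Suc n) X)"
    using extend_forest[OF finX lev_sub F(1)] by blast
  have finF': "finite F'" using finite_subset[OF order.trans[OF F'(3) lev_sub] finite_edges_on[OF finX]] .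
  have F'E: "F' \<subseteq> edges_on X" using F'(3) lev_sub by blast
  have "card (F' \<inter> lev j X) + cc j X = card X" if j: "j \<le> Suc n" for j
  proof (cases "j = Suc n")
    case True
    have "kap X F' + card F' = card X" using forest_card[OF finF' finX F'E F'(1)] .
    moreover have "F' \<inter> lev (Suc n) X = F'" using F'(3) by blast
    ultimately show ?thesis using True F'(4) unfolding cc_def by simp
  next
    case False
    then have jn: "j \<le> n" using j by simp
    have f: "forest (F' \<inter> lev j X)" using forest_subset[OF F'(1) Int_lower1] .
    have a: "kap X (F' \<inter> lev j X) + card (F' \<inter> lev j X) = card X"
      by (rule forest_card[OF _ finX _ f]) (use finF' F'E in auto)
    have b: "kap X (lev j X) \<le> kap X (F' \<inter> lev j X)" by (rule kap_antimono[OF _ finX]) blast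
    have c: "card (F \<inter> lev j X) \<le> card (F' \<inter> lev j X)"
      by (rule card_mono) (use finF' F'(2) in auto)
    show ?thesis using a b c F(4) jn unfolding cc_def by fastforce
  qed
  then show ?case using F' unfolding cc_def by blast
qed

lemma kruskal_tree:
  assumes X: "X \<subseteq> V" "X \<noteq> {}"
  shows "\<exists>T. spanning_tree X T \<and> (\<Sum>e\<in>T. w e) = Phi X"
proof -
  have finX: "finite X" using finite_subset[OF X(1) finV] .
  have k1: "K - 1 < K" using K2 by simp
  obtain F where F: "forest F" "F \<subseteq> lev (K - 1) X" "kap X F = cc (K - 1) X"
     "\<forall>j\<le>K - 1. card (F \<inter> lev j X) + cc j X = card X"
    using kruskal[OF X(1) k1] by blast
  have FE: "F \<subseteq> edges_on X" using F(2) lev_top[OF X(1)] by simp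
  have k: "kap X F = 1" using F(3) cc_top[OF X] by simp
  have st: "spanning_tree X F" unfolding spanning_tree_forest
    using FE F(1) kap_one_reach[OF k] by blast
  have finF: "finite F" using finite_subset[OF FE finite_edges_on[OF finX]] .
  have "card F + 1 = card X" using forest_card[OF finF finX FE F(1)] k by simp
  then have cF: "real (card F) = real (card X) - 1" by linarith
  have "(\<Sum>j<K-1. dl j * real (card (F \<inter> lev j X))) = (\<Sum>j<K-1. dl j * (real (card X) - real (cc j X)))"
  proof (rule sum.cong[OF refl])
    fix j assume "j \<in> {..<K-1}"
    then have "card (F \<inter> lev j X) + cc j X = card X" using F(4) by simp
    then have "real (card (F \<inter> lev j X)) = real (card X) - real (cc j X)" by linarith
    then show "dl j * real (card (F \<inter> lev j X)) = dl j * (real (card X) - real (cc j X))" by simp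
  qed
  then have "(\<Sum>e\<in>F. w e) = Phi X" unfolding tree_sum[OF X(1) FE] Phi_def cF by simp
  then show ?thesis using st by blast
qed

lemma mst_eq:
  assumes X: "X \<subseteq> V" "X \<noteq> {}"
  shows "mst w X = Phi X"
proof -
  have finX: "finite X" using finite_subset[OF X(1) finV] .
  have fin: "finite {T. spanning_tree X T}"
    by (rule finite_subset[of _ "Pow (edges_on X)"]) (use finite_edges_on[OF finX] in \<open>auto simp: spanning_tree_def\<close>)
  obtain T where T: "spanning_tree X T" "(\<Sum>e\<in>T. w e) = Phi X" using kruskal_tree[OF X] by blast
  show ?thesis unfolding mst_def
  proof (rule Min_eqI)
    show "finite ((\<lambda>T. \<Sum>e\<in>T. w e) ` {T. spanning_tree X T})" using fin by simp
    show "Phi X \<in> (\<lambda>T. \<Sum>e\<in>T. w e) ` {T. spanning_tree X T}" using T by force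
  next
    fix y assume "y \<in> (\<lambda>T. \<Sum>e\<in>T. w e) ` {T. spanning_tree X T}"
    then show "Phi X \<le> y" using tree_lower[OF X] by auto
  qed
qed

end

lemma mod_cancel_nat: "((a::nat) + t) mod m = (b + t) mod m \<longleftrightarrow> a mod m = b mod m"
  using cong_add_rcancel_nat[of a t b m] unfolding cong_def .

lemma edge_in: "a \<noteq> b \<Longrightarrow> a \<in> X \<Longrightarrow> b \<in> X \<Longrightarrow> {a, b} \<in> edges_on X"
  unfolding edges_on_def by auto

context wg
begin

lemma lev_iff: "X \<subseteq> V \<Longrightarrow> e \<in> lev j X \<longleftrightarrow> e \<in> lev j V \<and> e \<subseteq> X"
  unfolding lev_def edges_on_def by auto

lemma lev_mono_set: "X \<subseteq> X' \<Longrightarrow> lev j X \<subseteq> lev j X'"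
  unfolding lev_def edges_on_def by auto

lemma not_lev: "e \<in> edges_on V \<Longrightarrow> e \<notin> lev j V \<Longrightarrow> w e > th j"
  unfolding lev_def by auto

lemma isolated_lev: "q \<notin> X \<Longrightarrow> \<forall>e\<in>lev j X. q \<notin> e"
  unfolding lev_def edges_on_def by auto

lemma viol:
  assumes N: "V = N \<union> {r}" "r \<notin> N" and sm: "submodular_game N (spanning_tree_game r w)"
    and Y: "Y \<subseteq> V" "r \<in> Y" and pq: "p \<in> V" "q \<in> V" "p \<notin> Y" "q \<notin> Y" "p \<noteq> q"
    and s: "s \<in> Y" "w {p, s} \<le> w {p, q}" "w {q, s} \<le> w {p, q}"
    and i0: "i0 < K - 1" and uv: "u \<in> Y" "v \<in> Y" "w {q, u} \<le> th i0" "w {q, v} \<le> th i0"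
    and nr: "\<not> reach (insert {q, u} (lev i0 Y)) q v"
    and rr: "reach (insert {q, u} (lev i0 (insert p Y))) q v"
  shows False
proof -
  let ?Yp = "insert p Y" and ?Yq = "insert q Y" and ?U = "insert p (insert q Y)"
  have finY: "finite Y" using finite_subset[OF Y(1) finV] .
  have finU: "finite ?U" using finY by simp
  have subs: "?Yp \<subseteq> V" "?Yq \<subseteq> V" "?U \<subseteq> V" using Y pq by auto
  define A where "A = ?Yp - {r}"
  define B where "B = ?Yq - {r}"
  have AB: "A \<subseteq> N" "B \<subseteq> N" using subs N unfolding A_def B_def by auto
  have e1: "A \<union> {r} = ?Yp" "B \<union> {r} = ?Yq" "A \<union> B \<union> {r} = ?U" "A \<inter> B \<union> {r} = Y"
    using Y pq unfolding A_def B_def by auto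
  have smAB: "spanning_tree_game r w A + spanning_tree_game r w B \<ge>
        spanning_tree_game r w (A \<union> B) + spanning_tree_game r w (A \<inter> B)"
    using sm AB unfolding submodular_game_def by blast
  then have ineq: "Phi ?Yp + Phi ?Yq \<ge> Phi ?U + Phi Y"
  proof -
    have "mst w Y = Phi Y" using mst_eq[OF Y(1)] Y(2) by blast
    moreover have "mst w X = Phi X" if "X \<in> {?Yp, ?Yq, ?U}" for X using mst_eq subs that by auto
    ultimately show ?thesis using smAB unfolding spanning_tree_game_def e1 by simp
  qed
  have cards: "card ?Yp = Suc (card Y)" "card ?Yq = Suc (card Y)" "card ?U = Suc (Suc (card Y))"
    using finY pq by auto
  define D where "D j = real (cc j ?Yp) + real (cc j ?Yq) - real (cc j ?U) - real (cc j Y)" for j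
  have PhiA: "Phi X = (real (card X) - 1) * th (K - 1) - real (card X) * (\<Sum>j<K-1. dl j) + (\<Sum>j<K-1. dl j * real (cc j X))" for X
    unfolding Phi_def by (simp add: sum_subtractf sum_distrib_left right_diff_distrib mult.commute)
  have eq: "Phi ?Yp + Phi ?Yq - Phi ?U - Phi Y = (\<Sum>j<K-1. dl j * D j)"
    unfolding PhiA cards D_def by (simp add: sum.distrib sum_subtractf right_diff_distrib distrib_left algebra_simps)
  have comp: "cc j ?Yp + cc j ?Yq \<le> cc j ?U + cc j Y \<and> (j = i0 \<longrightarrow> cc j ?Yp + cc j ?Yq < cc j ?U + cc j Y)" for j
  proof -
    let ?F1 = "lev j ?Yp" and ?F2 = "lev j ?Yq" and ?F0 = "lev j Y" and ?H = "lev j ?U"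
    have k1: "kap ?U ?F1 = Suc (cc j ?Yp)"
    proof -
      have "?U = insert q ?Yp" by (simp add: insert_commute)
      then show ?thesis unfolding cc_def using kap_insert_vertex[of ?Yp q ?F1] finY pq isolated_lev[of q ?Yp j] by simp
    qed
    have k2: "kap ?U ?F2 = Suc (cc j ?Yq)"
      unfolding cc_def using kap_insert_vertex[of ?Yq p ?F2] finY pq isolated_lev[of p ?Yq j] by simp
    have k0: "kap ?U ?F0 = Suc (Suc (cc j Y))"
    proof -
      have "kap ?Yq ?F0 = Suc (kap Y ?F0)" using kap_insert_vertex[of Y q ?F0] finY pq isolated_lev[of q Y j] by simp
      moreover have "kap ?U ?F0 = Suc (kap ?Yq ?F0)"
        using kap_insert_vertex[of ?Yq p ?F0] finY pq isolated_lev[of p Y j] by simp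
      ultimately show ?thesis unfolding cc_def by simp
    qed
    have int: "?F1 \<inter> ?F2 = ?F0"
      using pq unfolding lev_def edges_on_def by auto
    have un: "?F1 \<union> ?F2 \<subseteq> ?H" using lev_mono_set[of ?Yp ?U j] lev_mono_set[of ?Yq ?U j] by auto
    have un2: "?H \<subseteq> insert {p, q} (?F1 \<union> ?F2)"
    proof
      fix e assume e: "e \<in> ?H"
      then have eU: "e \<subseteq> ?U" "card e = 2" "w e \<le> th j" unfolding lev_def edges_on_def by auto
      show "e \<in> insert {p, q} (?F1 \<union> ?F2)"
      proof (cases "p \<in> e \<and> q \<in> e")
        case True
        then have "{p, q} \<subseteq> e" by blast
        moreover have "card {p, q} = 2" using pq by simp
        moreover have "finite e" using eU(2) card.infinite by fastforce
        ultimately have "e = {p, q}" using eU(2) by (metis card_subset_eq)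
        then show ?thesis by simp
      next
        case False
        then have "e \<subseteq> ?Yp \<or> e \<subseteq> ?Yq" using eU(1) by blast
        then show ?thesis using eU unfolding lev_def edges_on_def by auto
      qed
    qed
    have kH: "kap ?U ?H = kap ?U (?F1 \<union> ?F2)"
    proof (cases "w {p, q} \<le> th j")
      case True
      have "{p, q} \<in> ?H" using True pq unfolding lev_def by (auto intro: edge_in)
      then have Heq: "?H = insert {p, q} (?F1 \<union> ?F2)" using un un2 by blast
      have ps: "{p, s} \<in> ?F1" using s True pq unfolding lev_def by (auto intro!: edge_in)
      have qs: "{s, q} \<in> ?F2" using s True pq unfolding lev_def by (auto intro!: edge_in simp: insert_commute)
      have "reach (?F1 \<union> ?F2) p s" by (rule reach_edge) (use ps in blast)
      moreover have "reach (?F1 \<union> ?F2) s q" by (rule reach_edge) (use qs in blast)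
      ultimately have "reach (?F1 \<union> ?F2) p q" by (rule reach_trans)
      then show ?thesis unfolding Heq by (rule kap_insert_reach)
    next
      case False
      then have "{p, q} \<notin> ?H" unfolding lev_def by auto
      then have "?H = ?F1 \<union> ?F2" using un un2 by blast
      then show ?thesis by simp
    qed
    have finF2: "finite ?F2" using finite_subset[OF lev_sub finite_edges_on[of ?Yq]] finY by simp
    have F2U: "?F2 \<subseteq> edges_on ?U" using lev_sub[of j ?Yq] edges_on_mono[of ?Yq ?U] by blast
    have sm1: "kap ?U ?F1 + kap ?U ?F2 \<le> kap ?U (?F1 \<union> ?F2) + kap ?U (?F1 \<inter> ?F2)"
      by (rule kap_supermod[OF finU finF2 F2U])
    have part1: "cc j ?Yp + cc j ?Yq \<le> cc j ?U + cc j Y"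
      using sm1 k1 k2 k0 kH int unfolding cc_def[of j ?U] by simp
    have part2: "cc j ?Yp + cc j ?Yq < cc j ?U + cc j Y" if j: "j = i0"
    proof -
      have F0: "?F0 \<subseteq> ?F1" by (rule lev_mono_set) blast
      have qu: "{q, u} \<in> ?F2" "{q, v} \<in> ?F2"
        using uv pq j unfolding lev_def by (auto intro!: edge_in)
      have st: "kap ?U ?F1 + kap ?U ?F2 < kap ?U (?F1 \<union> ?F2) + kap ?U ?F0"
      proof (rule kap_strict[OF finU finF2 F2U F0])
        show "insert {q, u} (insert {q, v} ?F0) \<subseteq> ?F2" using qu lev_mono_set[of Y ?Yq j] by blast
        show "q \<in> ?U" "u \<in> ?U" "v \<in> ?U" using uv by auto
        show "\<not> reach (insert {q, u} ?F0) q v" using nr j by simp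
        show "reach (insert {q, u} ?F1) q v" using rr j by simp
      qed
      then show ?thesis using k1 k2 k0 kH unfolding cc_def[of j ?U] by simp
    qed
    show ?thesis using part1 part2 by blast
  qed
  have "(\<Sum>j<K-1. dl j * D j) < (\<Sum>j<K-1. 0)"
  proof (rule sum_strict_mono_ex1)
    show "finite {..<K-1}" by simp
    show "\<forall>j\<in>{..<K-1}. dl j * D j \<le> 0"
    proof
      fix j assume "j \<in> {..<K-1}"
      then have "dl j > 0" using dl_pos[of j] by simp
      moreover have "D j \<le> 0" using comp[of j] unfolding D_def by linarith
      ultimately show "dl j * D j \<le> 0" by (simp add: mult_nonneg_nonpos)
    qed
    show "\<exists>j\<in>{..<K-1}. dl j * D j < 0"
    proof (intro bexI)
      show "i0 \<in> {..<K-1}" using i0 by simp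
      have "dl i0 > 0" using dl_pos[of i0] i0 by simp
      moreover have "D i0 < 0" using comp[of i0] unfolding D_def by linarith
      ultimately show "dl i0 * D i0 < 0" by (simp add: mult_pos_neg)
    qed
  qed
  then show False using eq ineq by simp
qed

end

context wg
begin

lemma lev_w: "e \<in> lev j X \<Longrightarrow> w e \<le> th j"
  unfolding lev_def by simp

lemma hole_viol:
  assumes N: "V = N \<union> {r}" "r \<notin> N" and sm: "submodular_game N (spanning_tree_game r w)"
    and i0: "i0 < K - 1" and h: "bad_hole V r (lev i0 V) cs"
  shows False
proof -
  let ?F = "lev i0 V"
  define m where "m = length cs"
  from h have ds: "distinct cs" and m4: "m \<ge> 4" and csV: "set cs \<subseteq> V"
    and hp: "\<forall>i<m. \<forall>j<m. i \<noteq> j \<longrightarrow> ({cs!i, cs!j} \<in> ?F \<longleftrightarrow> (j = Suc i mod m \<or> i = Suc j mod m))"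
    and ex: "\<exists>x\<in>set cs. x \<noteq> r \<and> {r, x} \<notin> ?F" unfolding bad_hole_def hole_def m_def by auto
  then obtain x where x: "x \<in> set cs" "x \<noteq> r" "{r, x} \<notin> ?F" by blast
  obtain t where t: "t < m" "cs ! t = x" using x(1)[unfolded in_set_conv_nth] unfolding m_def by blast
  define vv where "vv l = cs ! ((l + t) mod m)" for l
  have m0: "m > 0" using m4 by simp
  have vv_in: "vv l \<in> set cs" for l unfolding vv_def using m0 m_def by simp
  have vvV: "vv l \<in> V" for l using vv_in csV by blast
  have vv_inj: "l1 = l2" if "l1 < m" "l2 < m" "vv l1 = vv l2" for l1 l2
  proof -
    have "(l1 + t) mod m = (l2 + t) mod m"
      using that(3) ds m0 unfolding vv_def m_def by (simp add: nth_eq_iff_index_eq)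
    then have "l1 mod m = l2 mod m" by (simp add: mod_cancel_nat)
    then show ?thesis using that by simp
  qed
  have vv_surj: "\<exists>l<m. o' = vv l" if oc: "o' \<in> set cs" for o'
  proof -
    obtain i where i: "i < m" "o' = cs ! i" using oc[unfolded in_set_conv_nth] unfolding m_def by blast
    define l where "l = (i + (m - t)) mod m"
    have "(l + t) mod m = (i + (m - t) + t) mod m" unfolding l_def by (rule mod_add_left_eq)
    also have "i + (m - t) + t = i + m" using t by simp
    also have "(i + m) mod m = i" using i by simp
    finally have lt: "(l + t) mod m = i" .
    have "l < m" unfolding l_def using m0 by simp
    moreover have "o' = vv l" unfolding vv_def lt using i(2) .
    ultimately show ?thesis by blast
  qed
  have hv: "{vv l1, vv l2} \<in> ?F \<longleftrightarrow> (l2 = Suc l1 mod m \<or> l1 = Suc l2 mod m)"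
    if l: "l1 < m" "l2 < m" "l1 \<noteq> l2" for l1 l2
  proof -
    define i1 where "i1 = (l1 + t) mod m"
    define i2 where "i2 = (l2 + t) mod m"
    have i12: "i1 < m" "i2 < m" using m0 unfolding i1_def i2_def by simp_all
    have ne: "i1 \<noteq> i2"
    proof
      assume "i1 = i2" then have "l1 mod m = l2 mod m" unfolding i1_def i2_def by (simp add: mod_cancel_nat)
      then show False using l by simp
    qed
    have s1: "i2 = Suc i1 mod m \<longleftrightarrow> l2 = Suc l1 mod m"
    proof -
      have "Suc i1 mod m = (Suc l1 + t) mod m" unfolding i1_def by (simp add: mod_Suc_eq)
      then have "i2 = Suc i1 mod m \<longleftrightarrow> l2 mod m = Suc l1 mod m" unfolding i2_def using mod_cancel_nat[where a=l2 and b="Suc l1" and t=t and m=m] by simp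
      then show ?thesis using l by simp
    qed
    have s2: "i1 = Suc i2 mod m \<longleftrightarrow> l1 = Suc l2 mod m"
    proof -
      have "Suc i2 mod m = (Suc l2 + t) mod m" unfolding i2_def by (simp add: mod_Suc_eq)
      then have "i1 = Suc i2 mod m \<longleftrightarrow> l1 mod m = Suc l2 mod m" unfolding i1_def using mod_cancel_nat[where a=l1 and b="Suc l2" and t=t and m=m] by simp
      then show ?thesis using l by simp
    qed
    have "{cs!i1, cs!i2} \<in> ?F \<longleftrightarrow> (i2 = Suc i1 mod m \<or> i1 = Suc i2 mod m)" using hp i12 ne by blast
    then show ?thesis unfolding vv_def i1_def[symmetric] i2_def[symmetric] s1 s2 .
  qed
  have x0: "vv 0 = x" using t unfolding vv_def by simp
  define y where "y = vv 1"
  define z where "z = vv (m - 1)"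
  define a2 where "a2 = vv (m - 2)"
  have nm: "1 < m" "m - 1 < m" "m - 2 < m" "2 < m" "(0::nat) \<noteq> 1" "0 \<noteq> m - 1" "1 \<noteq> m - 1" "m - 2 \<noteq> m - 1"
    "0 \<noteq> m - 2" "1 \<noteq> m - 2" "2 \<noteq> m - 1" "(2::nat) \<noteq> 1" using m4 by auto
  have E1: "{x, y} \<in> ?F" using hv[of 0 1] nm unfolding x0 y_def by simp
  have E2: "{x, z} \<in> ?F"
  proof -
    have "Suc (m - 1) mod m = 0" using m0 by simp
    then show ?thesis using hv[of 0 "m - 1"] nm unfolding x0 z_def by simp
  qed
  have E3: "{y, z} \<notin> ?F"
  proof -
    have "Suc 1 mod m = 2" "Suc (m - 1) mod m = 0" using m4 by auto
    then show ?thesis using hv[of 1 "m - 1"] nm unfolding y_def z_def by auto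
  qed
  have E5: "{vv l, vv (Suc l)} \<in> ?F" if "Suc l < m" for l
    using hv[of l "Suc l"] that by simp
  have E4: "{x, vv l} \<notin> ?F" if "l < m" "l \<noteq> 0" "l \<noteq> 1" "l \<noteq> m - 1" for l
  proof -
    have "Suc l < m" using that by linarith
    then have "Suc l mod m \<noteq> 0" by simp
    moreover have "l \<noteq> Suc 0 mod m" using that nm by simp
    ultimately show ?thesis using hv[of 0 l] that unfolding x0 by auto
  qed
  have vv_ne: "vv l1 \<noteq> vv l2" if "l1 < m" "l2 < m" "l1 \<noteq> l2" for l1 l2 using vv_inj that by blast
  have yz: "y \<noteq> z" "y \<noteq> x" "z \<noteq> x" "a2 \<noteq> y" "a2 \<noteq> z" "a2 \<noteq> x"
    unfolding y_def z_def a2_def x0[symmetric]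
    using vv_ne[of 1 "m - 1"] vv_ne[of 1 0] vv_ne[of "m - 1" 0] vv_ne[of "m - 2" 1] vv_ne[of "m - 2" "m - 1"]
      vv_ne[of "m - 2" 0] nm m0 by auto
  have Fw: "e \<in> ?F \<Longrightarrow> w e \<le> th i0" for e by (rule lev_w)
  have yr: "y \<noteq> r" "z \<noteq> r" using E1 E2 x(3) by (auto simp: insert_commute)
  define Y where "Y = (set cs \<union> {r}) - {y, z}"
  have YV: "Y \<subseteq> V" using csV N unfolding Y_def by auto
  have rY: "r \<in> Y" using yr unfolding Y_def by simp
  have xY: "x \<in> Y" using x(1) yz unfolding Y_def by simp
  have a2Y: "a2 \<in> Y" using vv_in yz unfolding Y_def a2_def by simp
  have yzY: "y \<notin> Y" "z \<notin> Y" unfolding Y_def by auto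
  have yzV: "y \<in> V" "z \<in> V" unfolding y_def z_def by (rule vvV)+
  have wyz: "th i0 < w {y, z}" using not_lev[OF edge_in[OF yz(1) yzV] E3] .
  have iso_x: "\<forall>e\<in>lev i0 Y. x \<notin> e"
  proof (intro ballI notI)
    fix e assume e: "e \<in> lev i0 Y" and xe: "x \<in> e"
    then have eF: "e \<in> ?F" and eY: "e \<in> edges_on Y" using lev_iff[OF YV] lev_sub by blast+
    obtain a b where ab: "e = {a, b}" "a \<noteq> b" "a \<in> Y" "b \<in> Y" using eY by (rule edges_on_E)
    obtain o' where o': "e = {x, o'}" "o' \<in> Y" "o' \<noteq> x"
    proof (cases "x = a")
      case True then show ?thesis using that[of b] ab by simp
    next
      case False then have "x = b" using ab xe by simp
      then show ?thesis using that[of a] ab by (simp add: insert_commute)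
    qed
    show False
    proof (cases "o' = r")
      case True then show ?thesis using eF o' x(3) by (simp add: insert_commute)
    next
      case False
      then have "o' \<in> set cs" "o' \<noteq> y" "o' \<noteq> z" using o' unfolding Y_def by auto
      then obtain l where l: "l < m" "o' = vv l" using vv_surj by blast
      have "l \<noteq> 0"
      proof
        assume "l = 0" then have "o' = x" using l(2) x0 by simp
        then show False using o'(3) by simp
      qed
      moreover have "l \<noteq> 1" using l \<open>o' \<noteq> y\<close> unfolding y_def by auto
      moreover have "l \<noteq> m - 1" using l \<open>o' \<noteq> z\<close> unfolding z_def by auto
      ultimately show False using E4[of l] l eF o' by simp
    qed
  qed
  have iso_z: "\<forall>e\<in>lev i0 Y. z \<notin> e" by (rule isolated_lev[OF yzY(2)])
  have nr: "\<not> reach (insert {z, x} (lev i0 Y)) z a2"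
  proof
    assume "reach (insert {z, x} (lev i0 Y)) z a2"
    then have "reach (lev i0 Y) z a2 \<or> (reach (lev i0 Y) z z \<and> reach (lev i0 Y) x a2) \<or>
               (reach (lev i0 Y) z x \<and> reach (lev i0 Y) z a2)" by (rule reach_insert)
    then show False
    proof (elim disjE conjE)
      assume "reach (lev i0 Y) z a2" then show False using reach_isolated[OF iso_z] yz by blast
    next
      assume "reach (lev i0 Y) x a2" then show False using reach_isolated[OF iso_x] yz by blast
    next
      assume "reach (lev i0 Y) z x" then show False using reach_isolated[OF iso_z] yz by blast
    qed
  qed
  have path: "2 \<le> l \<longrightarrow> l \<le> m - 2 \<longrightarrow> reach (lev i0 Y) (vv 2) (vv l)" for l
  proof (induction l)
    case 0 then show ?case by simp
  next
    case (Suc l)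
    show ?case
    proof (intro impI)
      assume l: "2 \<le> Suc l" "Suc l \<le> m - 2"
      show "reach (lev i0 Y) (vv 2) (vv (Suc l))"
      proof (cases "Suc l = 2")
        case True then show ?thesis by (simp add: numeral_2_eq_2)
      next
        case False
        then have l2: "2 \<le> l" "l \<le> m - 2" using l by auto
        have IH: "reach (lev i0 Y) (vv 2) (vv l)" using Suc l2 by blast
        have sl: "Suc l < m" using l m4 by linarith
        have eF: "{vv l, vv (Suc l)} \<in> ?F" by (rule E5[OF sl])
        have inY: "vv l \<in> Y" "vv (Suc l) \<in> Y"
        proof -
          have "vv l \<noteq> y" "vv l \<noteq> z" "vv (Suc l) \<noteq> y" "vv (Suc l) \<noteq> z"
            unfolding y_def z_def using vv_ne[of l 1] vv_ne[of l "m - 1"] vv_ne[of "Suc l" 1] vv_ne[of "Suc l" "m - 1"]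
              sl l l2 nm by auto
          then show "vv l \<in> Y" "vv (Suc l) \<in> Y" using vv_in unfolding Y_def by auto
        qed
        have "{vv l, vv (Suc l)} \<in> lev i0 Y" using eF inY lev_iff[OF YV] by blast
        then have "reach (lev i0 Y) (vv l) (vv (Suc l))" by (rule reach_edge)
        then show ?thesis by (rule reach_trans[OF IH])
      qed
    qed
  qed
  have a1Y: "vv 2 \<in> Y"
  proof -
    have "vv 2 \<noteq> y" "vv 2 \<noteq> z" unfolding y_def z_def using vv_ne[of 2 1] vv_ne[of 2 "m - 1"] nm by auto
    then show ?thesis using vv_in unfolding Y_def by auto
  qed
  have rr: "reach (insert {z, x} (lev i0 (insert y Y))) z a2"
  proof -
    let ?G = "insert {z, x} (lev i0 (insert y Y))"
    have YyV: "insert y Y \<subseteq> V" using YV yzV by blast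
    have g1: "reach ?G z x" by (rule reach_edge) simp
    have "{x, y} \<in> lev i0 (insert y Y)" using E1 xY lev_iff[OF YyV] by blast
    then have g2: "reach ?G x y" by (intro reach_edge) blast
    have "{vv 1, vv 2} \<in> ?F" using E5[of 1] nm by (simp add: numeral_2_eq_2)
    then have "{y, vv 2} \<in> lev i0 (insert y Y)" using a1Y lev_iff[OF YyV] unfolding y_def by blast
    then have g3: "reach ?G y (vv 2)" by (intro reach_edge) blast
    have "reach (lev i0 Y) (vv 2) a2" using path[of "m - 2"] m4 unfolding a2_def by simp
    then have g4: "reach ?G (vv 2) a2" by (rule reach_mono[rotated]) (use lev_mono_set[of Y "insert y Y" i0] in blast)
    show ?thesis using reach_trans[OF reach_trans[OF reach_trans[OF g1 g2] g3] g4] .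
  qed
  show False
  proof (rule viol[OF N sm YV rY yzV yzY yz(1) xY _ _ i0 xY a2Y _ _ nr rr])
    show "w {y, x} \<le> w {y, z}" using Fw[OF E1] wyz by (simp add: insert_commute)
    show "w {z, x} \<le> w {y, z}" using Fw[OF E2] wyz by (simp add: insert_commute)
    show "w {z, x} \<le> th i0" using Fw[OF E2] by (simp add: insert_commute)
    have "{vv (m - 2), vv (Suc (m - 2))} \<in> ?F" using E5[of "m - 2"] m4 by simp
    moreover have "Suc (m - 2) = m - 1" using m4 by simp
    ultimately show "w {z, a2} \<le> th i0" using Fw unfolding z_def a2_def by (simp add: insert_commute)
  qed
qed

end

context wg
begin

lemma diamond_viol:
  assumes N: "V = N \<union> {r}" "r \<notin> N" and sm: "submodular_game N (spanning_tree_game r w)"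
    and i0: "i0 < K - 1"
    and dist: "distinct [a, b, c, d]" and sub: "{a, b, c, d} \<subseteq> V"
    and E: "{a, c} \<in> lev i0 V" "{a, d} \<in> lev i0 V" "{b, c} \<in> lev i0 V" "{b, d} \<in> lev i0 V"
      "{a, b} \<notin> lev i0 V"
    and cov: "(w {c, a} \<le> w {c, d} \<and> w {a, d} \<le> w {c, d}) \<or> (w {c, b} \<le> w {c, d} \<and> w {b, d} \<le> w {c, d})"
    and ar: "a \<noteq> r" "{r, a} \<notin> lev i0 V"
  shows False
proof -
  let ?F = "lev i0 V"
  have rc: "r \<noteq> c" using E(1) ar(2) by (auto simp: insert_commute)
  have rd: "r \<noteq> d" using E(2) ar(2) by (auto simp: insert_commute)
  define Y where "Y = {a, b, r}"
  have rV: "r \<in> V" using N by simp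
  have YV: "Y \<subseteq> V" using sub rV unfolding Y_def by auto
  have rY: "r \<in> Y" "a \<in> Y" "b \<in> Y" unfolding Y_def by auto
  have cdV: "c \<in> V" "d \<in> V" using sub by auto
  have cdY: "c \<notin> Y" "d \<notin> Y" using dist rc rd unfolding Y_def by auto
  have cd: "c \<noteq> d" using dist by simp
  obtain s where s: "s \<in> Y" "w {c, s} \<le> w {c, d}" "w {d, s} \<le> w {c, d}"
  proof (cases "w {c, a} \<le> w {c, d} \<and> w {a, d} \<le> w {c, d}")
    case True then show ?thesis using that[of a] rY by (simp add: insert_commute)
  next
    case False then have "w {c, b} \<le> w {c, d} \<and> w {b, d} \<le> w {c, d}" using cov by blast
    then show ?thesis using that[of b] rY by (simp add: insert_commute)
  qed
  have iso_a: "\<forall>e\<in>lev i0 Y. a \<notin> e"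
  proof (intro ballI notI)
    fix e assume e: "e \<in> lev i0 Y" and ae: "a \<in> e"
    then have eF: "e \<in> ?F" and eY: "e \<in> edges_on Y" using lev_iff[OF YV] lev_sub by blast+
    obtain x y where xy: "e = {x, y}" "x \<noteq> y" "x \<in> Y" "y \<in> Y" using eY by (rule edges_on_E)
    have "e = {a, b} \<or> e = {r, a}" using xy ae unfolding Y_def by auto
    then show False using eF E(5) ar(2) by blast
  qed
  have iso_d: "\<forall>e\<in>lev i0 Y. d \<notin> e" by (rule isolated_lev[OF cdY(2)])
  have ab: "a \<noteq> b" "b \<noteq> d" "a \<noteq> d" using dist by auto
  have nr: "\<not> reach (insert {d, a} (lev i0 Y)) d b"
  proof
    assume "reach (insert {d, a} (lev i0 Y)) d b"
    then have "reach (lev i0 Y) d b \<or> (reach (lev i0 Y) d d \<and> reach (lev i0 Y) a b) \<or>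
               (reach (lev i0 Y) d a \<and> reach (lev i0 Y) d b)" by (rule reach_insert)
    then show False
    proof (elim disjE conjE)
      assume "reach (lev i0 Y) d b" then show False using reach_isolated[OF iso_d] ab by blast
    next
      assume "reach (lev i0 Y) a b" then show False using reach_isolated[OF iso_a] ab by blast
    next
      assume "reach (lev i0 Y) d a" then show False using reach_isolated[OF iso_d] ab by blast
    qed
  qed
  have rr: "reach (insert {d, a} (lev i0 (insert c Y))) d b"
  proof -
    let ?G = "insert {d, a} (lev i0 (insert c Y))"
    have YcV: "insert c Y \<subseteq> V" using YV cdV by blast
    have g1: "reach ?G d a" by (rule reach_edge) simp
    have "{a, c} \<in> lev i0 (insert c Y)" using E(1) rY lev_iff[OF YcV] by blast
    then have g2: "reach ?G a c" by (intro reach_edge) blast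
    have "{c, b} \<in> lev i0 (insert c Y)" using E(3) rY lev_iff[OF YcV] by (simp add: insert_commute)
    then have g3: "reach ?G c b" by (intro reach_edge) blast
    show ?thesis using reach_trans[OF reach_trans[OF g1 g2] g3] .
  qed
  show False
  proof (rule viol[OF N sm YV rY(1) cdV cdY cd s i0 rY(2) rY(3) _ _ nr rr])
    show "w {d, a} \<le> th i0" using lev_w[OF E(2)] by (simp add: insert_commute)
    show "w {d, b} \<le> th i0" using lev_w[OF E(4)] by (simp add: insert_commute)
  qed
qed

end

theorem lemma2:
  fixes N :: "'a set" and r :: 'a and w :: "'a set \<Rightarrow> real"
  assumes "finite N" and "r \<notin> N"
    and "submodular_game N (spanning_tree_game r w)"
    and "1 \<le> i" and "i < card (w ` edges_on (N \<union> {r}))"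
  shows "(\<forall>cs. \<not> bad_hole (N \<union> {r}) r (level_edges (N \<union> {r}) w i) cs) \<and>
         (\<forall>a b c d. \<not> bad_diamond (N \<union> {r}) r w (level_edges (N \<union> {r}) w i) a b c d)"
proof -
  let ?V = "N \<union> {r}"
  have K2: "2 \<le> card (w ` edges_on ?V)" using assms(4,5) by linarith
  interpret wg ?V w by unfold_locales (use assms(1) K2 in auto)
  have LE: "level_edges ?V w i = lev (i - 1) ?V"
    unfolding level_edges_def weight_value_def lev_def th_def ..
  have i0: "i - 1 < K - 1" using assms(4,5) by linarith
  show ?thesis
  proof (intro conjI allI notI)
    fix cs assume "bad_hole ?V r (level_edges ?V w i) cs"
    then show False using hole_viol[OF refl assms(2,3) i0] unfolding LE by blast
  next
    fix a b c d assume "bad_diamond ?V r w (level_edges ?V w i) a b c d"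
    then have ind: "induced_diamond ?V (lev (i - 1) ?V) a b c d"
      and cov: "chord_covers w {c, d} [{c, a}, {a, d}] [{c, b}, {b, d}]"
      and tip: "\<exists>x\<in>{a, b}. x \<noteq> r \<and> {r, x} \<notin> lev (i - 1) ?V"
      unfolding bad_diamond_def LE by auto
    have cov': "(w {c, a} \<le> w {c, d} \<and> w {a, d} \<le> w {c, d}) \<or> (w {c, b} \<le> w {c, d} \<and> w {b, d} \<le> w {c, d})"
      using cov unfolding chord_covers_def by auto
    from ind have D: "distinct [a, b, c, d]" "{a, b, c, d} \<subseteq> ?V"
      "{a, c} \<in> lev (i - 1) ?V" "{a, d} \<in> lev (i - 1) ?V" "{b, c} \<in> lev (i - 1) ?V" "{b, d} \<in> lev (i - 1) ?V"
      "{a, b} \<notin> lev (i - 1) ?V"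
      unfolding induced_diamond_def by auto
    from tip show False
    proof
      fix x assume x: "x \<in> {a, b}" "x \<noteq> r \<and> {r, x} \<notin> lev (i - 1) ?V"
      show False
      proof (cases "x = a")
        case True
        show False by (rule diamond_viol[OF refl assms(2,3) i0 D cov']) (use x True in auto)
      next
        case False
        then have xb: "x = b" using x by simp
        have D': "distinct [b, a, c, d]" "{b, a, c, d} \<subseteq> ?V" "{b, a} \<notin> lev (i - 1) ?V"
          using D by (auto simp: insert_commute)
        have cov'': "(w {c, b} \<le> w {c, d} \<and> w {b, d} \<le> w {c, d}) \<or> (w {c, a} \<le> w {c, d} \<and> w {a, d} \<le> w {c, d})"
          using cov' by blast
        show False by (rule diamond_viol[OF refl assms(2,3) i0 D'(1,2) D(5,6,3,4) D'(3) cov'']) (use x xb in auto)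
      qed
    qed
  qed
qed

end
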